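(* Let $k\ge 1$ be an integer and let $w\in\mathbb{R}$. The sets \[ S=\{\xi\in\mathbb{R}\,;\,\omega_k(\xi)\ge w\}\quad\text{and}\quad S^{\mathrm{lead}}=\{\xi\in\mathbb{R}\,;\,\omega^{\mathrm{lead}}_k(\xi)\ge w\} \] have the same Hausdorff dimension. The same holds if the inequalities $\ge$ are replaced by strict inequalities $>$ in the definitions of $S$ and $S^{\mathrm{lead}}$.
   Context: For a polynomial $P\in\mathbb{Z}[x]$, $\|P\|$ denotes the largest absolute value of its coefficients, and $c_k(P)$ denotes the coefficient of $x^k$ in $P$. For $\xi\in\mathbb{R}$ and an integer $k\ge 1$, $\omega_k(\xi)$ is the supremum of all $\omega\in\mathbb{R}$ for which there exist infinitely many non-zero polynomials $P\in\mathbb{Z}[x]$ of degree at most $k$ with $|P(\xi)|\le\|P\|^{-\omega}$. The quantity $\omega^{\mathrm{lead}}_k(\xi)$ is defined in the same way as $\omega_k(\xi)$, except that one restricts to non-zero polynomials $P\in\mathbb{Z}[x]$ of degree at most $k$ satisfying $|c_k(P)|=\|P\|$. *)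

theory Defs
  imports "HOL-Analysis.Analysis" "HOL-Computational_Algebra.Polynomial"
begin

definition poly_height :: "int poly \<Rightarrow> int" where
  "poly_height P = Max {\<bar>coeff P i\<bar> | i. i \<le> degree P}"

definition omega :: "nat \<Rightarrow> real \<Rightarrow> ereal" where
  "omega k \<xi> = Sup {ereal \<omega> | \<omega>.
     infinite {P :: int poly. P \<noteq> 0 \<and> degree P \<le> k \<and>
        \<bar>poly (map_poly real_of_int P) \<xi>\<bar> \<le> real_of_int (poly_height P) powr (- \<omega>)}}"

definition omega_lead :: "nat \<Rightarrow> real \<Rightarrow> ereal" where
  "omega_lead k \<xi> = Sup {ereal \<omega> | \<omega>.
     infinite {P :: int poly. P \<noteq> 0 \<and> degree P \<le> k \<and> \<bar>coeff P k\<bar> = poly_height P \<and>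
        \<bar>poly (map_poly real_of_int P) \<xi>\<bar> \<le> real_of_int (poly_height P) powr (- \<omega>)}}"

definition hausdorff_pre :: "real \<Rightarrow> real \<Rightarrow> real set \<Rightarrow> ennreal" where
  "hausdorff_pre s \<delta> A = Inf {(\<Sum>i. ennreal (diameter (U i) powr s)) | U :: nat \<Rightarrow> real set.
       A \<subseteq> (\<Union>i. U i) \<and> (\<forall>i. bounded (U i) \<and> diameter (U i) \<le> \<delta>)}"

definition hausdorff_measure :: "real \<Rightarrow> real set \<Rightarrow> ennreal" where
  "hausdorff_measure s A = (SUP \<delta>\<in>{0<..}. hausdorff_pre s \<delta> A)"

text \<open>Hausdorff dimension: infimum of the s > 0 with H^s(A) = 0
  (for A a subset of the reals this set contains every s > 1).\<close>
definition hausdorff_dim :: "real set \<Rightarrow> real" where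
  "hausdorff_dim A = Inf {s. s > 0 \<and> hausdorff_measure s A = 0}"

end

theory Submission
  imports Defs
begin


abbreviation ev :: "int poly \<Rightarrow> real \<Rightarrow> real" where
  "ev p x \<equiv> poly (map_poly real_of_int p) x"

lemma poly_sum_le:
  fixes q :: "'a::comm_semiring_1 poly"
  assumes "degree q \<le> n"
  shows "poly q x = (\<Sum>i\<le>n. coeff q i * x ^ i)"
proof -
  have "poly q x = (\<Sum>i\<le>degree q. coeff q i * x ^ i)" by (rule poly_altdef)
  also have "\<dots> = (\<Sum>i\<le>n. coeff q i * x ^ i)"
    by (rule sum.mono_neutral_left) (use assms in \<open>auto, metis coeff_eq_0 not_le mult_zero_left\<close>)
  finally show ?thesis .
qed

lemma ev_sum:
  assumes "degree p \<le> n"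
  shows "ev p x = (\<Sum>i\<le>n. real_of_int (coeff p i) * x ^ i)"
proof -
  have "degree (map_poly real_of_int p) \<le> n"
    using assms map_poly_degree_leq order_trans by blast
  then show ?thesis by (simp add: poly_sum_le coeff_map_poly)
qed

lemma ev_int:
  "ev p (real_of_int x) = real_of_int (poly p x)"
proof -
  have "ev p (real_of_int x) = (\<Sum>i\<le>degree p. real_of_int (coeff p i) * (real_of_int x) ^ i)"
    by (rule ev_sum) simp
  then show ?thesis by (simp add: poly_altdef)
qed

lemma map_poly_of_int_mult:
  "map_poly (of_int :: int \<Rightarrow> 'a::comm_ring_1) (p * q) = map_poly of_int p * map_poly of_int q"
  by (rule poly_eqI) (simp add: coeff_map_poly coeff_mult)

lemma map_poly_of_int_power:
  "map_poly (of_int :: int \<Rightarrow> 'a::comm_ring_1) (p ^ n) = map_poly of_int p ^ n"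
  by (induction n) (simp_all add: map_poly_of_int_mult)

lemma height_ge: "\<bar>coeff P i\<bar> \<le> poly_height P"
proof -
  have fin: "finite {\<bar>coeff P i\<bar> | i. i \<le> degree P}" by simp
  show ?thesis
  proof (cases "i \<le> degree P")
    case True
    then show ?thesis unfolding poly_height_def by (intro Max_ge[OF fin]) auto
  next
    case False
    then have "coeff P i = 0" by (simp add: coeff_eq_0)
    moreover have "\<bar>coeff P 0\<bar> \<le> poly_height P"
      unfolding poly_height_def by (intro Max_ge[OF fin]) auto
    ultimately show ?thesis by simp
  qed
qed

lemma height_attained: "\<exists>i. poly_height P = \<bar>coeff P i\<bar>"
proof -
  have fin: "finite {\<bar>coeff P i\<bar> | i. i \<le> degree P}" by simp
  have "poly_height P \<in> {\<bar>coeff P i\<bar> | i. i \<le> degree P}"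
    unfolding poly_height_def by (rule Max_in[OF fin]) auto
  then show ?thesis by auto
qed

lemma height_pos: "P \<noteq> 0 \<Longrightarrow> poly_height P \<ge> 1"
proof -
  assume "P \<noteq> 0"
  then have "coeff P (degree P) \<noteq> 0" by simp
  then show ?thesis using height_ge[of P "degree P"] by linarith
qed

lemma height_lead:
  assumes "\<And>j. \<bar>coeff Q j\<bar> \<le> \<bar>coeff Q k\<bar>"
  shows "poly_height Q = \<bar>coeff Q k\<bar>"
  using height_attained[of Q] height_ge[of Q k] assms by (metis antisym)

lemma finite_height:
  "finite {Q :: int poly. degree Q \<le> k \<and> real_of_int (poly_height Q) \<le> B}"
proof -
  define b where "b = \<lceil>B\<rceil>"
  have "{Q :: int poly. degree Q \<le> k \<and> real_of_int (poly_height Q) \<le> B}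
     \<subseteq> Poly ` {xs. set xs \<subseteq> {-b..b} \<and> length xs = Suc k}"
  proof
    fix Q :: "int poly" assume "Q \<in> {Q. degree Q \<le> k \<and> real_of_int (poly_height Q) \<le> B}"
    then have d: "degree Q \<le> k" and h: "real_of_int (poly_height Q) \<le> B" by auto
    have hb: "poly_height Q \<le> b" using h unfolding b_def by linarith
    have "Q = Poly (map (coeff Q) [0..<Suc k])"
      by (rule poly_eqI) (use d in \<open>auto simp: nth_default_def coeff_eq_0 simp del: upt_Suc\<close>)
    moreover have "set (map (coeff Q) [0..<Suc k]) \<subseteq> {-b..b}"
    proof
      fix y assume "y \<in> set (map (coeff Q) [0..<Suc k])"
      then obtain i where "y = coeff Q i" by auto
      then show "y \<in> {-b..b}" using height_ge[of Q i] hb by auto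
    qed
    ultimately show "Q \<in> Poly ` {xs. set xs \<subseteq> {-b..b} \<and> length xs = Suc k}" by force
  qed
  moreover have "finite (Poly ` {xs. set xs \<subseteq> {-b..b} \<and> length xs = Suc k})"
    by (intro finite_imageI finite_lists_length_eq) simp
  ultimately show ?thesis by (rule finite_subset)
qed



definition lag :: "nat \<Rightarrow> nat \<Rightarrow> real poly" where
  "lag k l = smult (1 / (\<Prod>i\<in>{..k}-{l}. (real l - real i))) (\<Prod>i\<in>{..k}-{l}. [:- real i, 1:])"

lemma poly_lag: "poly (lag k l) x = (\<Prod>i\<in>{..k}-{l}. (x - real i)) / (\<Prod>i\<in>{..k}-{l}. (real l - real i))"
  by (simp add: lag_def poly_prod)

lemma poly_lag_same: "poly (lag k l) (real l) = 1"
proof -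
  have "(\<Prod>i\<in>{..k}-{l}. (real l - real i)) \<noteq> 0"
    by (subst prod_zero_iff) auto
  then show ?thesis by (simp add: poly_lag)
qed

lemma poly_lag_other: "l' \<le> k \<Longrightarrow> l' \<noteq> l \<Longrightarrow> poly (lag k l) (real l') = 0"
proof -
  assume a: "l' \<le> k" "l' \<noteq> l"
  have "(\<Prod>i\<in>{..k}-{l}. (real l' - real i)) = 0"
    by (rule prod_zero) (use a in auto)
  then show ?thesis by (simp add: poly_lag)
qed

lemma degree_lag: "l \<le> k \<Longrightarrow> degree (lag k l) \<le> k"
proof -
  assume lk: "l \<le> k" 
  have "degree (\<Prod>i\<in>{..k}-{l}. [:- real i, 1:]) \<le> sum (degree \<circ> (\<lambda>i. [:- real i, 1:])) ({..k}-{l})"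
    by (rule degree_prod_sum_le) simp
  also have "\<dots> = card ({..k}-{l})" by simp
  also have "\<dots> \<le> k"
    using lk by (auto simp: card_Diff_singleton)
  finally show ?thesis unfolding lag_def using degree_smult_le order_trans by blast
qed

lemma lagrange_interp:
  fixes p :: "real poly"
  assumes "degree p \<le> k"
  shows "p = (\<Sum>l\<le>k. smult (poly p (real l)) (lag k l))"
proof (rule ccontr)
  define D where "D = p - (\<Sum>l\<le>k. smult (poly p (real l)) (lag k l))"
  assume "p \<noteq> (\<Sum>l\<le>k. smult (poly p (real l)) (lag k l))"
  then have D0: "D \<noteq> 0" unfolding D_def by simp
  have "degree (\<Sum>l\<le>k. smult (poly p (real l)) (lag k l)) \<le> k"
    by (rule degree_sum_le) (auto intro: order_trans[OF degree_smult_le] degree_lag)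
  then have dD: "degree D \<le> k" unfolding D_def using assms degree_diff_le by blast
  have roots: "real ` {..k} \<subseteq> {x. poly D x = 0}"
  proof
    fix x assume "x \<in> real ` {..k}"
    then obtain l' where l': "l' \<le> k" "x = real l'" by auto
    have "(\<Sum>l\<le>k. poly p (real l) * poly (lag k l) (real l')) = poly p (real l')"
    proof -
      have "(\<Sum>l\<le>k. poly p (real l) * poly (lag k l) (real l')) =
            (\<Sum>l\<in>{l'}. poly p (real l) * poly (lag k l) (real l'))"
        by (rule sum.mono_neutral_right) (use l' poly_lag_other in auto)
      then show ?thesis by (simp add: poly_lag_same)
    qed
    then show "x \<in> {x. poly D x = 0}" using l' by (simp add: D_def poly_sum)
  qed
  have "card (real ` {..k}) \<le> card {x. poly D x = 0}"
    by (rule card_mono[OF poly_roots_finite[OF D0] roots])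
  also have "\<dots> \<le> degree D" by (rule card_poly_roots_bound[OF D0])
  finally have "Suc k \<le> k" using dD by (simp add: card_image)
  then show False by simp
qed

lemma lagrange_bound:
  "\<exists>KL\<ge>0. \<forall>p::real poly. \<forall>M. degree p \<le> k \<longrightarrow> (\<forall>l\<le>k. \<bar>poly p (real l)\<bar> \<le> M) \<longrightarrow>
      (\<forall>j. \<bar>coeff p j\<bar> \<le> KL * M)"
proof (intro exI[of _ "\<Sum>j\<le>k. \<Sum>l\<le>k. \<bar>coeff (lag k l) j\<bar>"] conjI allI impI)
  show "0 \<le> (\<Sum>j\<le>k. \<Sum>l\<le>k. \<bar>coeff (lag k l) j\<bar>)" by (intro sum_nonneg) auto
  fix p :: "real poly" and M j
  assume d: "degree p \<le> k" and M: "\<forall>l\<le>k. \<bar>poly p (real l)\<bar> \<le> M"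
  have M0: "0 \<le> M" using M by fastforce
  show "\<bar>coeff p j\<bar> \<le> (\<Sum>j\<le>k. \<Sum>l\<le>k. \<bar>coeff (lag k l) j\<bar>) * M"
  proof (cases "j \<le> k")
    case False
    then have "coeff p j = 0" using d by (simp add: coeff_eq_0)
    then show ?thesis using M0 by (simp add: sum_nonneg)
  next
    case True
    have "coeff p j = (\<Sum>l\<le>k. poly p (real l) * coeff (lag k l) j)"
      by (subst lagrange_interp[OF d]) (simp add: coeff_sum)
    also have "\<bar>\<dots>\<bar> \<le> (\<Sum>l\<le>k. \<bar>poly p (real l) * coeff (lag k l) j\<bar>)" by (rule sum_abs)
    also have "\<dots> \<le> (\<Sum>l\<le>k. M * \<bar>coeff (lag k l) j\<bar>)"
      by (rule sum_mono) (use M in \<open>auto simp: abs_mult intro: mult_right_mono\<close>)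
    also have "\<dots> = M * (\<Sum>l\<le>k. \<bar>coeff (lag k l) j\<bar>)" by (simp add: sum_distrib_left)
    also have "\<dots> \<le> M * (\<Sum>j\<le>k. \<Sum>l\<le>k. \<bar>coeff (lag k l) j\<bar>)"
      by (intro mult_left_mono M0 member_le_sum[where f="\<lambda>j. \<Sum>l\<le>k. \<bar>coeff (lag k l) j\<bar>"])
         (use True in \<open>auto intro: sum_nonneg\<close>)
    finally show ?thesis by (simp add: mult.commute)
  qed
qed



definition Bp :: "nat \<Rightarrow> nat \<Rightarrow> nat \<Rightarrow> int poly" where
  "Bp k m i = monom 1 (k - i) * [:1, int m:] ^ i"

definition Rtr :: "nat \<Rightarrow> nat \<Rightarrow> int poly \<Rightarrow> int poly" where
  "Rtr k m P = (\<Sum>i\<le>k. smult (coeff P i) (Bp k m i))"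

definition Qtr :: "nat \<Rightarrow> nat \<Rightarrow> nat \<Rightarrow> int poly \<Rightarrow> int poly" where
  "Qtr k N m P = pcompose (Rtr k m P) [:0, int N:]"

lemma lin_pow: "degree ([:1, a:] ^ i) \<le> i \<and> coeff ([:1, a::int:] ^ i) i = a ^ i"
proof (induction i)
  case 0
  then show ?case by simp
next
  case (Suc i)
  have e: "[:1, a:] ^ Suc i = [:1, a:] ^ i + pCons 0 (smult a ([:1, a:] ^ i))"
    by (simp add: algebra_simps)
  have "degree ([:1, a:] ^ Suc i) \<le> Suc i"
    using degree_power_le[of "[:1,a:]" "Suc i"] by (auto intro: order_trans)
  moreover have "coeff ([:1, a:] ^ i) (Suc i) = 0" using Suc.IH by (simp add: coeff_eq_0)
  ultimately show ?case using Suc.IH by (subst e) simp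
qed

lemma degree_Bp: "i \<le> k \<Longrightarrow> degree (Bp k m i) \<le> k"
proof -
  assume ik: "i \<le> k"
  have "degree (Bp k m i) \<le> degree (monom (1::int) (k - i)) + degree ([:1, int m:] ^ i)"
    unfolding Bp_def by (rule degree_mult_le)
  also have "\<dots> \<le> (k - i) + i" using lin_pow[of "int m" i]
    by (intro add_mono) (auto simp: degree_monom_le)
  finally show ?thesis using ik by simp
qed

lemma coeff_Bp_k: "i \<le> k \<Longrightarrow> coeff (Bp k m i) k = int m ^ i"
  using lin_pow[of "int m" i] by (simp add: Bp_def coeff_monom_mult)

lemma degree_Rtr: "degree (Rtr k m P) \<le> k"
  unfolding Rtr_def
  by (rule degree_sum_le) (auto intro: order_trans[OF degree_smult_le] degree_Bp)

lemma coeff_Rtr: "coeff (Rtr k m P) j = (\<Sum>i\<le>k. coeff P i * coeff (Bp k m i) j)"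
  by (simp add: Rtr_def coeff_sum)

lemma coeff_Rtr_k: "degree P \<le> k \<Longrightarrow> coeff (Rtr k m P) k = poly P (int m)"
  by (simp add: coeff_Rtr coeff_Bp_k poly_sum_le)

lemma coeff_Qtr: "coeff (Qtr k N m P) j = int N ^ j * coeff (Rtr k m P) j"
  by (simp add: Qtr_def coeff_pcompose_linear)

lemma degree_Qtr: "degree (Qtr k N m P) \<le> k"
proof (rule degree_le, intro allI impI)
  fix j assume "k < j"
  then have "coeff (Rtr k m P) j = 0" using degree_Rtr[of k m P] by (simp add: coeff_eq_0)
  then show "coeff (Qtr k N m P) j = 0" by (simp add: coeff_Qtr)
qed

lemma ev_Bp: "ev (Bp k m i) y = y ^ (k - i) * (1 + real m * y) ^ i"
  by (simp add: Bp_def map_poly_of_int_mult map_poly_of_int_power map_poly_monom map_poly_pCons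
      poly_monom algebra_simps)

lemma ev_Rtr: "ev (Rtr k m P) y = (\<Sum>i\<le>k. real_of_int (coeff P i) * (y ^ (k - i) * (1 + real m * y) ^ i))"
proof -
  have "ev (Rtr k m P) y = (\<Sum>j\<le>k. real_of_int (coeff (Rtr k m P) j) * y ^ j)"
    by (rule ev_sum[OF degree_Rtr])
  also have "\<dots> = (\<Sum>j\<le>k. \<Sum>i\<le>k. real_of_int (coeff P i) * (real_of_int (coeff (Bp k m i) j) * y ^ j))"
    by (simp add: coeff_Rtr sum_distrib_right mult.assoc)
  also have "\<dots> = (\<Sum>i\<le>k. \<Sum>j\<le>k. real_of_int (coeff P i) * (real_of_int (coeff (Bp k m i) j) * y ^ j))"
    by (rule sum.swap)
  also have "\<dots> = (\<Sum>i\<le>k. real_of_int (coeff P i) * ev (Bp k m i) y)"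
    by (rule sum.cong[OF refl]) (simp add: ev_sum[OF degree_Bp] sum_distrib_left)
  finally show ?thesis by (simp add: ev_Bp)
qed

lemma ev_Qtr: "ev (Qtr k N m P) x = ev (Rtr k m P) (real N * x)"
  by (simp add: ev_sum[OF degree_Qtr] ev_sum[OF degree_Rtr] coeff_Qtr power_mult_distrib algebra_simps)

lemma ev_Qtr_T:
  assumes "degree P \<le> k" "\<xi> \<noteq> real m" "N > 0"
  shows "ev (Qtr k N m P) (1 / (real N * (\<xi> - real m))) = ev P \<xi> / (\<xi> - real m) ^ k"
proof -
  define d where "d = \<xi> - real m"
  have d0: "d \<noteq> 0" using assms unfolding d_def by simp
  have NN: "real N * (1 / (real N * d)) = 1 / d" using assms d0 by simp
  have tm: "(1/d) ^ (k - i) * (1 + real m * (1/d)) ^ i = \<xi> ^ i / d ^ k" if "i \<le> k" for i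
  proof -
    have "1 + real m * (1/d) = \<xi> / d" using d0 by (simp add: d_def field_simps)
    then have "(1/d) ^ (k - i) * (1 + real m * (1/d)) ^ i = \<xi> ^ i / (d ^ (k - i) * d ^ i)"
      by (simp add: power_divide)
    also have "d ^ (k - i) * d ^ i = d ^ k" using that by (simp add: power_add[symmetric])
    finally show ?thesis .
  qed
  have "ev (Qtr k N m P) (1 / (real N * d)) = (\<Sum>i\<le>k. real_of_int (coeff P i) * (\<xi> ^ i / d ^ k))"
    unfolding ev_Qtr NN ev_Rtr by (rule sum.cong[OF refl]) (simp only: tm atMost_iff)
  also have "\<dots> = ev P \<xi> / d ^ k"
    by (simp add: ev_sum[OF assms(1)] sum_divide_distrib)
  finally show ?thesis unfolding d_def .
qed



definition good :: "nat \<Rightarrow> nat \<Rightarrow> real \<Rightarrow> real \<Rightarrow> nat \<Rightarrow> int poly \<Rightarrow> bool" where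
  "good k N K C m P \<longleftrightarrow> Qtr k N m P \<noteq> 0 \<and> \<bar>coeff (Qtr k N m P) k\<bar> = poly_height (Qtr k N m P)
     \<and> real_of_int (poly_height P) \<le> K * real_of_int (poly_height (Qtr k N m P))
     \<and> real_of_int (poly_height (Qtr k N m P)) \<le> C * real_of_int (poly_height P)"

lemma height_ge_real: "\<bar>real_of_int (coeff P i)\<bar> \<le> real_of_int (poly_height P)"
  using height_ge[of P i] by (metis of_int_abs of_int_le_iff)

lemma key_poly:
  "\<exists>N>0. \<exists>K>0. \<exists>C>0. \<forall>P. P \<noteq> 0 \<and> degree P \<le> k \<longrightarrow> (\<exists>m\<le>k. good k N K C m P)"
proof -
  obtain KL where KL: "KL \<ge> 0" "\<And>p M. degree (p::real poly) \<le> k \<Longrightarrow> (\<forall>l\<le>k. \<bar>poly p (real l)\<bar> \<le> M) \<Longrightarrow>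
      (\<forall>j. \<bar>coeff p j\<bar> \<le> KL * M)"
    using lagrange_bound[of k] by blast
  define Cb where "Cb = (\<Sum>mm\<le>k. \<Sum>j\<le>k. \<Sum>i\<le>k. real_of_int \<bar>coeff (Bp k mm i) j\<bar>)"
  define K where "K = KL + 1"
  define N where "N = nat \<lceil>Cb * K\<rceil> + 1"
  define C where "C = real N ^ k * (\<Sum>i\<le>k. real k ^ i)"
  have K0: "K > 0" using KL unfolding K_def by simp
  have N0: "N > 0" unfolding N_def by simp
  have Cb0: "Cb \<ge> 0" unfolding Cb_def by (intro sum_nonneg) auto
  have NCb: "Cb * K \<le> real N" unfolding N_def by linarith
  have C0: "C > 0"
  proof -
    have "(1::real) \<le> (\<Sum>i\<le>k. real k ^ i)"
      using member_le_sum[of 0 "{..k}" "\<lambda>i. real k ^ i"] by simp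
    then show ?thesis unfolding C_def using N0 by simp
  qed
  have main: "\<exists>m\<le>k. good k N K C m P" if P0: "P \<noteq> 0" and dP: "degree P \<le> k" for P
  proof -
    define f where "f l = \<bar>poly P (int l)\<bar>" for l
    have fin: "finite (f ` {..k})" by simp
    have "Max (f ` {..k}) \<in> f ` {..k}" by (rule Max_in[OF fin]) auto
    then obtain m where m0: "m \<in> {..k}" "Max (f ` {..k}) = f m" by (rule imageE)
    then have m: "m \<le> k" "f m = Max (f ` {..k})" by auto
    have fm: "f l \<le> f m" if "l \<le> k" for l using m that fin by auto
    define pm where "pm = f m"
    define H where "H = poly_height P"
    have H1: "H \<ge> 1" using height_pos[OF P0] unfolding H_def .
    have evl: "\<bar>poly (map_poly real_of_int P) (real l)\<bar> \<le> real_of_int pm" if "l \<le> k" for l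
    proof -
      have "poly (map_poly real_of_int P) (real l) = real_of_int (poly P (int l))"
        using ev_int[of P "int l"] by simp
      then show ?thesis using fm[OF that] unfolding pm_def f_def by simp
    qed
    have "degree (map_poly real_of_int P) \<le> k" using dP map_poly_degree_leq order_trans by blast
    from KL(2)[OF this] evl
    have cb: "\<bar>real_of_int (coeff P j)\<bar> \<le> KL * real_of_int pm" for j
      by (auto simp: coeff_map_poly)
    obtain i0 where "H = \<bar>coeff P i0\<bar>" using height_attained[of P] unfolding H_def by blast
    then have HKL: "real_of_int H \<le> KL * real_of_int pm" using cb[of i0] by simp
    have pm0: "pm \<ge> 0" unfolding pm_def f_def by simp
    have HK: "real_of_int H \<le> K * real_of_int pm" using HKL pm0 unfolding K_def by (simp add: algebra_simps)
    have pm1: "pm \<ge> 1"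
    proof (rule ccontr)
      assume "\<not> pm \<ge> 1" then have "pm = 0" using pm0 by simp
      then show False using HK H1 by simp
    qed
    define Q where "Q = Qtr k N m P"
    have ck: "coeff Q k = int N ^ k * poly P (int m)"
      unfolding Q_def by (simp add: coeff_Qtr coeff_Rtr_k[OF dP])
    have ckabs: "\<bar>coeff Q k\<bar> = int N ^ k * pm" unfolding ck pm_def f_def by (simp add: abs_mult)
    have cR: "real_of_int \<bar>coeff (Rtr k m P) j\<bar> \<le> real_of_int H * Cb" for j
    proof (cases "j \<le> k")
      case False
      then have "coeff (Rtr k m P) j = 0" using degree_Rtr[of k m P] by (simp add: coeff_eq_0)
      then show ?thesis using H1 Cb0 by simp
    next
      case True
      have "real_of_int \<bar>coeff (Rtr k m P) j\<bar> = \<bar>\<Sum>i\<le>k. real_of_int (coeff P i) * real_of_int (coeff (Bp k m i) j)\<bar>"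
        by (simp add: coeff_Rtr)
      also have "\<dots> \<le> (\<Sum>i\<le>k. \<bar>real_of_int (coeff P i) * real_of_int (coeff (Bp k m i) j)\<bar>)"
        by (rule sum_abs)
      also have "\<dots> \<le> (\<Sum>i\<le>k. real_of_int H * real_of_int \<bar>coeff (Bp k m i) j\<bar>)"
        by (rule sum_mono) (use height_ge_real[of P] in \<open>auto simp: abs_mult H_def intro: mult_right_mono\<close>)
      also have "\<dots> = real_of_int H * (\<Sum>i\<le>k. real_of_int \<bar>coeff (Bp k m i) j\<bar>)"
        by (simp add: sum_distrib_left)
      also have "(\<Sum>i\<le>k. real_of_int \<bar>coeff (Bp k m i) j\<bar>) \<le> (\<Sum>j\<le>k. \<Sum>i\<le>k. real_of_int \<bar>coeff (Bp k m i) j\<bar>)"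
        by (rule member_le_sum[where f="\<lambda>j. \<Sum>i\<le>k. real_of_int \<bar>coeff (Bp k m i) j\<bar>"])
           (use True in \<open>auto intro: sum_nonneg\<close>)
      also have "\<dots> \<le> Cb" unfolding Cb_def
        by (rule member_le_sum[where f="\<lambda>mm. \<Sum>j\<le>k. \<Sum>i\<le>k. real_of_int \<bar>coeff (Bp k mm i) j\<bar>"])
           (use m in \<open>auto intro: sum_nonneg\<close>)
      finally show ?thesis using H1 by (simp add: mult_left_mono)
    qed
    have dom: "\<bar>coeff Q j\<bar> \<le> \<bar>coeff Q k\<bar>" for j
    proof (cases "j < k")
      case False
      show ?thesis
      proof (cases "j = k")
        case False
        with \<open>\<not> j < k\<close> have "coeff Q j = 0" using degree_Qtr[of k N m P] unfolding Q_def
          by (simp add: coeff_eq_0)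
        then show ?thesis by simp
      qed simp
    next
      case True
      have "real_of_int \<bar>coeff Q j\<bar> = real N ^ j * real_of_int \<bar>coeff (Rtr k m P) j\<bar>"
        unfolding Q_def by (simp add: coeff_Qtr abs_mult)
      also have "\<dots> \<le> real N ^ (k - 1) * (real_of_int H * Cb)"
        by (rule mult_mono) (use cR N0 True in \<open>auto intro: power_increasing\<close>)
      also have "\<dots> \<le> real N ^ (k - 1) * (K * real_of_int pm * Cb)"
        using HK Cb0 by (intro mult_left_mono mult_right_mono) auto
      also have "\<dots> = real N ^ (k - 1) * (Cb * K) * real_of_int pm" by simp
      also have "\<dots> \<le> real N ^ (k - 1) * real N * real_of_int pm"
        using NCb pm0 by (intro mult_left_mono mult_right_mono) auto
      also have "\<dots> = real N ^ k * real_of_int pm"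
        using True by (cases k) auto
      also have "\<dots> = real_of_int \<bar>coeff Q k\<bar>" unfolding ckabs by simp
      finally show ?thesis by linarith
    qed
    have HQ: "poly_height Q = \<bar>coeff Q k\<bar>" by (rule height_lead[OF dom])
    have Q0: "Q \<noteq> 0"
    proof
      assume "Q = 0" then have "coeff Q k = 0" by simp
      then show False using ckabs pm1 N0 by simp
    qed
    have A: "real_of_int H \<le> K * real_of_int (poly_height Q)"
    proof -
      have "real_of_int pm \<le> real N ^ k * real_of_int pm" using pm0 N0
        by (simp add: mult_le_cancel_right1)
      then show ?thesis using HK K0 HQ ckabs by (simp add: order_trans mult_left_mono)
    qed
    have B: "real_of_int (poly_height Q) \<le> C * real_of_int H"
    proof -
      have "real_of_int pm = \<bar>\<Sum>i\<le>k. real_of_int (coeff P i) * real m ^ i\<bar>"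
        unfolding pm_def f_def using ev_int[of P "int m"] ev_sum[OF dP, of "real m"] by simp
      also have "\<dots> \<le> (\<Sum>i\<le>k. \<bar>real_of_int (coeff P i) * real m ^ i\<bar>)" by (rule sum_abs)
      also have "\<dots> \<le> (\<Sum>i\<le>k. real_of_int H * real k ^ i)"
        by (rule sum_mono) (use height_ge_real[of P] m H1 in \<open>auto simp: abs_mult H_def intro!: mult_mono power_mono\<close>)
      finally have "real_of_int pm \<le> real_of_int H * (\<Sum>i\<le>k. real k ^ i)" by (simp add: sum_distrib_left)
      then have "real N ^ k * real_of_int pm \<le> real N ^ k * (real_of_int H * (\<Sum>i\<le>k. real k ^ i))"
        by (rule mult_left_mono) simp
      then show ?thesis using HQ ckabs unfolding C_def by (simp add: algebra_simps)
    qed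
    show ?thesis unfolding good_def using m(1) Q0 HQ A B unfolding Q_def H_def by auto
  qed
  show ?thesis using N0 K0 C0 main by blast
qed



definition As :: "nat \<Rightarrow> real \<Rightarrow> real \<Rightarrow> int poly set" where
  "As k \<xi> \<omega> = {P :: int poly. P \<noteq> 0 \<and> degree P \<le> k \<and>
        \<bar>poly (map_poly real_of_int P) \<xi>\<bar> \<le> real_of_int (poly_height P) powr (- \<omega>)}"

definition Al :: "nat \<Rightarrow> real \<Rightarrow> real \<Rightarrow> int poly set" where
  "Al k \<xi> \<omega> = {P :: int poly. P \<noteq> 0 \<and> degree P \<le> k \<and> \<bar>coeff P k\<bar> = poly_height P \<and>
        \<bar>poly (map_poly real_of_int P) \<xi>\<bar> \<le> real_of_int (poly_height P) powr (- \<omega>)}"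

lemma omega_As: "omega k \<xi> = Sup {ereal \<omega> | \<omega>. infinite (As k \<xi> \<omega>)}"
  unfolding omega_def As_def ..

lemma omega_Al: "omega_lead k \<xi> = Sup {ereal \<omega> | \<omega>. infinite (Al k \<xi> \<omega>)}"
  unfolding omega_lead_def Al_def ..

lemma omega_lead_le: "omega_lead k \<xi> \<le> omega k \<xi>"
  unfolding omega_As omega_Al
proof (rule Sup_subset_mono)
  show "{ereal \<omega> | \<omega>. infinite (Al k \<xi> \<omega>)} \<subseteq> {ereal \<omega> | \<omega>. infinite (As k \<xi> \<omega>)}"
  proof
    fix x assume "x \<in> {ereal \<omega> | \<omega>. infinite (Al k \<xi> \<omega>)}"
    then obtain \<omega> where x: "x = ereal \<omega>" "infinite (Al k \<xi> \<omega>)" by auto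
    have "Al k \<xi> \<omega> \<subseteq> As k \<xi> \<omega>" unfolding Al_def As_def by auto
    then have "infinite (As k \<xi> \<omega>)" using x(2) finite_subset by blast
    then show "x \<in> {ereal \<omega> | \<omega>. infinite (As k \<xi> \<omega>)}" using x(1) by auto
  qed
qed

lemma Qtr_inj:
  assumes "N > 0" "degree P1 \<le> k" "degree P2 \<le> k" "Qtr k N m P1 = Qtr k N m P2"
  shows "P1 = P2"
proof -
  define D where "D = map_poly real_of_int P1 - map_poly real_of_int P2"
  have ev: "ev P1 x = ev P2 x" if "x \<noteq> real m" for x
  proof -
    have "ev P1 x / (x - real m) ^ k = ev P2 x / (x - real m) ^ k"
      using ev_Qtr_T[OF assms(2) that assms(1)] ev_Qtr_T[OF assms(3) that assms(1)] assms(4) by metis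
    moreover have "(x - real m) ^ k \<noteq> 0" using that by simp
    ultimately show ?thesis by (metis divide_cancel_right)
  qed
  have "D = 0"
  proof (rule ccontr)
    assume D0: "D \<noteq> 0"
    have "UNIV - {real m} \<subseteq> {x. poly D x = 0}" using ev unfolding D_def by auto
    moreover have "infinite (UNIV - {real m} :: real set)"
      by (simp add: infinite_UNIV_char_0)
    ultimately show False using poly_roots_finite[OF D0] finite_subset by blast
  qed
  then have "map_poly real_of_int P1 = map_poly real_of_int P2" unfolding D_def by simp
  then have "coeff (map_poly real_of_int P1) n = coeff (map_poly real_of_int P2) n" for n by simp
  then show ?thesis by (intro poly_eqI) (simp add: coeff_map_poly)
qed



lemma height_bound_transfer:
  fixes hP hQ K C \<omega> :: real
  assumes hP: "hP > 0" and hQ: "hQ > 0" and K: "K > 0" and C: "C > 0"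
    and A: "hP \<le> K * hQ" and B: "hQ \<le> C * hP"
  shows "hP powr (- \<omega>) \<le> (C powr \<omega> + K powr (- \<omega>)) * hQ powr (- \<omega>)"
proof (cases "\<omega> \<ge> 0")
  case True
  have "hQ / C \<le> hP" using B C by (simp add: field_simps mult.commute)
  then have "hP powr (- \<omega>) \<le> (hQ / C) powr (- \<omega>)"
    by (intro powr_mono2') (use True hQ C in auto)
  also have "\<dots> = C powr \<omega> * hQ powr (- \<omega>)"
  proof -
    have "(hQ / C) powr (- \<omega>) = hQ powr (- \<omega>) / C powr (- \<omega>)"
      using hQ C by (intro powr_divide)
    also have "\<dots> = C powr \<omega> * hQ powr (- \<omega>)"
      using C by (simp add: powr_minus_divide)
    finally show ?thesis .
  qed
  also have "\<dots> \<le> (C powr \<omega> + K powr (- \<omega>)) * hQ powr (- \<omega>)"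
    by (intro mult_right_mono) auto
  finally show ?thesis .
next
  case False
  have "hP powr (- \<omega>) \<le> (K * hQ) powr (- \<omega>)"
    by (intro powr_mono2) (use False hP A in auto)
  also have "\<dots> = K powr (- \<omega>) * hQ powr (- \<omega>)"
    using hQ K by (simp add: powr_mult)
  also have "\<dots> \<le> (C powr \<omega> + K powr (- \<omega>)) * hQ powr (- \<omega>)"
    by (intro mult_right_mono) auto
  finally show ?thesis .
qed

lemma transfer:
  assumes N: "N > 0" and K: "K > 0" and C: "C > 0"
    and key: "\<forall>P. P \<noteq> 0 \<and> degree P \<le> k \<longrightarrow> (\<exists>m\<le>k. good k N K C m P)"
    and xi: "\<xi> \<notin> real ` {..k}"
    and inf: "infinite (As k \<xi> \<omega>)" and lt: "\<omega>' < \<omega>"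
  shows "\<exists>m\<le>k. infinite (Al k (1 / (real N * (\<xi> - real m))) \<omega>')"
proof -
  have "As k \<xi> \<omega> \<subseteq> (\<Union>m\<in>{..k}. {P \<in> As k \<xi> \<omega>. good k N K C m P})"
    using key unfolding As_def by auto
  then have "infinite (\<Union>m\<in>{..k}. {P \<in> As k \<xi> \<omega>. good k N K C m P})"
    using inf finite_subset by blast
  then obtain m where m: "m \<le> k" and infG: "infinite {P \<in> As k \<xi> \<omega>. good k N K C m P}"
    by auto
  define G where "G = {P \<in> As k \<xi> \<omega>. good k N K C m P}"
  define T where "T = 1 / (real N * (\<xi> - real m))"
  have xm: "\<xi> \<noteq> real m" using xi m by auto
  define d where "d = \<bar>\<xi> - real m\<bar> ^ k"
  have d0: "d > 0" using xm unfolding d_def by simp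
  define Kc where "Kc = (C powr \<omega> + K powr (- \<omega>)) / d"
  have Kc0: "Kc > 0" unfolding Kc_def using d0 C by (intro divide_pos_pos add_pos_nonneg) auto
  have inj: "inj_on (Qtr k N m) G"
    by (rule inj_onI) (use Qtr_inj[OF N] in \<open>auto simp: G_def As_def\<close>)
  define I where "I = Qtr k N m ` G"
  have infI: "infinite I" unfolding I_def using infG inj finite_imageD G_def by blast
  have boundI: "\<bar>ev Q T\<bar> \<le> Kc * real_of_int (poly_height Q) powr (- \<omega>)
       \<and> Q \<noteq> 0 \<and> degree Q \<le> k \<and> \<bar>coeff Q k\<bar> = poly_height Q" if "Q \<in> I" for Q
  proof -
    obtain P where P: "P \<in> G" "Q = Qtr k N m P" using \<open>Q \<in> I\<close> unfolding I_def by auto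
    have P0: "P \<noteq> 0" and dP: "degree P \<le> k"
      and evP: "\<bar>ev P \<xi>\<bar> \<le> real_of_int (poly_height P) powr (- \<omega>)"
      and g: "good k N K C m P" using P(1) unfolding G_def As_def by auto
    have Q0: "Q \<noteq> 0" and lead: "\<bar>coeff Q k\<bar> = poly_height Q"
      and A: "real_of_int (poly_height P) \<le> K * real_of_int (poly_height Q)"
      and B: "real_of_int (poly_height Q) \<le> C * real_of_int (poly_height P)"
      using g unfolding good_def P(2) by auto
    have hP: "real_of_int (poly_height P) > 0" using height_pos[OF P0] by simp
    have hQ: "real_of_int (poly_height Q) > 0" using height_pos[OF Q0] by simp
    have "\<bar>ev Q T\<bar> = \<bar>ev P \<xi>\<bar> / d"
      unfolding P(2) T_def d_def by (simp add: ev_Qtr_T[OF dP xm N] abs_divide power_abs)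
    also have "\<dots> \<le> real_of_int (poly_height P) powr (- \<omega>) / d"
      using evP d0 by (simp add: divide_right_mono)
    also have "\<dots> \<le> (C powr \<omega> + K powr (- \<omega>)) * real_of_int (poly_height Q) powr (- \<omega>) / d"
      using height_bound_transfer[OF hP hQ K C A B, of \<omega>] d0 by (simp add: divide_right_mono)
    also have "\<dots> = Kc * real_of_int (poly_height Q) powr (- \<omega>)" unfolding Kc_def by simp
    finally show ?thesis using Q0 lead degree_Qtr P(2) by auto
  qed
  define B where "B = Kc powr (1 / (\<omega> - \<omega>'))"
  have finF: "finite {Q :: int poly. degree Q \<le> k \<and> real_of_int (poly_height Q) \<le> B}"
    by (rule finite_height)
  have "I - {Q :: int poly. degree Q \<le> k \<and> real_of_int (poly_height Q) \<le> B} \<subseteq> Al k T \<omega>'"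
  proof
    fix Q assume QI: "Q \<in> I - {Q :: int poly. degree Q \<le> k \<and> real_of_int (poly_height Q) \<le> B}"
    then have b: "\<bar>ev Q T\<bar> \<le> Kc * real_of_int (poly_height Q) powr (- \<omega>)"
      and Q0: "Q \<noteq> 0" and dQ: "degree Q \<le> k" and lead: "\<bar>coeff Q k\<bar> = poly_height Q"
      using boundI by auto
    have hB: "real_of_int (poly_height Q) > B" using QI dQ by auto
    define h where "h = real_of_int (poly_height Q)"
    have h0: "h > 0" unfolding h_def using height_pos[OF Q0] by simp
    have B0: "B > 0" unfolding B_def using Kc0 by simp
    have "Kc = B powr (\<omega> - \<omega>')" unfolding B_def using Kc0 lt by (simp add: powr_powr)
    also have "\<dots> \<le> h powr (\<omega> - \<omega>')"
      by (intro powr_mono2) (use lt B0 hB h_def in auto)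
    finally have "Kc * h powr (- \<omega>) \<le> h powr (\<omega> - \<omega>') * h powr (- \<omega>)"
      by (intro mult_right_mono) auto
    also have "\<dots> = h powr (- \<omega>')" by (simp add: powr_add[symmetric])
    finally have "\<bar>ev Q T\<bar> \<le> h powr (- \<omega>')" using b unfolding h_def by linarith
    then show "Q \<in> Al k T \<omega>'" unfolding Al_def h_def using Q0 dQ lead by auto
  qed
  moreover have "infinite (I - {Q :: int poly. degree Q \<le> k \<and> real_of_int (poly_height Q) \<le> B})"
    using infI finF by (rule Diff_infinite_finite[rotated])
  ultimately have "infinite (Al k T \<omega>')" using finite_subset by blast
  then show ?thesis using m unfolding T_def by blast
qed

lemma omega_le:
  assumes N: "N > 0" and K: "K > 0" and C: "C > 0"
    and key: "\<forall>P. P \<noteq> 0 \<and> degree P \<le> k \<longrightarrow> (\<exists>m\<le>k. good k N K C m P)"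
    and xi: "\<xi> \<notin> real ` {..k}"
  shows "\<exists>m\<le>k. omega k \<xi> \<le> omega_lead k (1 / (real N * (\<xi> - real m)))"
proof (rule ccontr)
  assume "\<not> ?thesis"
  then have lt: "\<forall>m\<le>k. omega_lead k (1 / (real N * (\<xi> - real m))) < omega k \<xi>" by auto
  define F where "F = (\<lambda>m. omega_lead k (1 / (real N * (\<xi> - real m)))) ` {..k}"
  have finF: "finite F" "F \<noteq> {}" unfolding F_def by auto
  define s where "s = Max F"
  have "s \<in> F" unfolding s_def using finF by (rule Max_in)
  then have "s < omega k \<xi>" using lt unfolding F_def by auto
  then obtain x where x: "x \<in> {ereal \<omega> | \<omega>. infinite (As k \<xi> \<omega>)}" "s < x"
    unfolding omega_As by (auto simp: less_Sup_iff)
  then obtain \<omega> where om: "x = ereal \<omega>" "infinite (As k \<xi> \<omega>)" by auto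
  obtain r where r: "s < ereal r" "ereal r < x" using ereal_dense2[OF x(2)] by blast
  have "r < \<omega>" using r(2) om(1) by simp
  from transfer[OF N K C key xi om(2) this]
  obtain m where m: "m \<le> k" "infinite (Al k (1 / (real N * (\<xi> - real m))) r)" by blast
  have "ereal r \<le> omega_lead k (1 / (real N * (\<xi> - real m)))"
    unfolding omega_Al by (rule Sup_upper) (use m in auto)
  also have "\<dots> \<le> s" unfolding s_def using finF m(1) unfolding F_def by (intro Max_ge) auto
  finally show False using r(1) by simp
qed



definition hnull :: "real \<Rightarrow> real set \<Rightarrow> bool" where
  "hnull s A \<longleftrightarrow> (\<forall>\<delta>>0. \<forall>\<epsilon>>0. \<exists>U :: nat \<Rightarrow> real set. A \<subseteq> (\<Union>i. U i) \<and>
     (\<forall>i. bounded (U i) \<and> diameter (U i) \<le> \<delta>) \<and> (\<Sum>i. ennreal (diameter (U i) powr s)) < ennreal \<epsilon>)"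

lemma pre_zero_iff:
  "hausdorff_pre s \<delta> A = 0 \<longleftrightarrow> (\<forall>\<epsilon>>0. \<exists>U :: nat \<Rightarrow> real set. A \<subseteq> (\<Union>i. U i) \<and>
     (\<forall>i. bounded (U i) \<and> diameter (U i) \<le> \<delta>) \<and> (\<Sum>i. ennreal (diameter (U i) powr s)) < ennreal \<epsilon>)"
  (is "?L \<longleftrightarrow> ?R")
proof
  assume ?L
  then have "\<forall>x>bot. \<exists>i\<in>{(\<Sum>i. ennreal (diameter (U i) powr s)) | U :: nat \<Rightarrow> real set.
       A \<subseteq> (\<Union>i. U i) \<and> (\<forall>i. bounded (U i) \<and> diameter (U i) \<le> \<delta>)}. i < x"
    unfolding hausdorff_pre_def bot_ennreal[symmetric] Inf_eq_bot_iff .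
  show ?R
  proof (intro allI impI)
    fix e :: real assume "e > 0"
    then have "ennreal e > bot" by (simp add: bot_ennreal)
    with \<open>\<forall>x>bot. _\<close> obtain i where
      "i \<in> {(\<Sum>i. ennreal (diameter (U i) powr s)) | U :: nat \<Rightarrow> real set.
       A \<subseteq> (\<Union>i. U i) \<and> (\<forall>i. bounded (U i) \<and> diameter (U i) \<le> \<delta>)}" "i < ennreal e"
      by blast
    then show "\<exists>U :: nat \<Rightarrow> real set. A \<subseteq> (\<Union>i. U i) \<and>
     (\<forall>i. bounded (U i) \<and> diameter (U i) \<le> \<delta>) \<and> (\<Sum>i. ennreal (diameter (U i) powr s)) < ennreal e"
      by blast
  qed
next
  assume R: ?R
  have "\<forall>x>bot. \<exists>i\<in>{(\<Sum>i. ennreal (diameter (U i) powr s)) | U :: nat \<Rightarrow> real set.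
       A \<subseteq> (\<Union>i. U i) \<and> (\<forall>i. bounded (U i) \<and> diameter (U i) \<le> \<delta>)}. i < x"
  proof (intro allI impI)
    fix x :: ennreal assume "x > bot"
    then obtain e where e: "e > 0" "ennreal e \<le> x"
    proof (cases x)
      case (real r)
      then show ?thesis using \<open>x > bot\<close> that[of r] by (auto simp: bot_ennreal)
    next
      case top
      then show ?thesis using that[of 1] by simp
    qed
    from R e(1) obtain U :: "nat \<Rightarrow> real set" where
      U: "A \<subseteq> (\<Union>i. U i)" "\<forall>i. bounded (U i) \<and> diameter (U i) \<le> \<delta>"
         "(\<Sum>i. ennreal (diameter (U i) powr s)) < ennreal e" by blast
    then show "\<exists>i\<in>{(\<Sum>i. ennreal (diameter (U i) powr s)) | U :: nat \<Rightarrow> real set.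
       A \<subseteq> (\<Union>i. U i) \<and> (\<forall>i. bounded (U i) \<and> diameter (U i) \<le> \<delta>)}. i < x"
      using e(2) by (intro bexI[of _ "(\<Sum>i. ennreal (diameter (U i) powr s))"]) auto
  qed
  then show ?L unfolding hausdorff_pre_def bot_ennreal[symmetric] Inf_eq_bot_iff .
qed

lemma hm_zero_iff: "hausdorff_measure s A = 0 \<longleftrightarrow> hnull s A"
proof -
  have "hausdorff_measure s A = 0 \<longleftrightarrow> (\<forall>\<delta>\<in>{0<..}. hausdorff_pre s \<delta> A = 0)"
    unfolding hausdorff_measure_def bot_ennreal[symmetric] by (rule SUP_bot_conv(1))
  then show ?thesis unfolding hnull_def by (simp only: pre_zero_iff greaterThan_iff Ball_def)
qed



lemma hnull_subset: "hnull s A \<Longrightarrow> B \<subseteq> A \<Longrightarrow> hnull s B"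
  unfolding hnull_def by (meson order_trans)

lemma hnull_range: "s > 0 \<Longrightarrow> hnull s (range (f :: nat \<Rightarrow> real))"
  unfolding hnull_def
proof (intro allI impI)
  fix \<delta> \<epsilon> :: real assume s: "s > 0" and d: "\<delta> > 0" and e: "\<epsilon> > 0"
  show "\<exists>U :: nat \<Rightarrow> real set. range f \<subseteq> (\<Union>i. U i) \<and>
     (\<forall>i. bounded (U i) \<and> diameter (U i) \<le> \<delta>) \<and> (\<Sum>i. ennreal (diameter (U i) powr s)) < ennreal \<epsilon>"
    by (rule exI[of _ "\<lambda>i. {f i}"]) (use d e in auto)
qed

lemma hnull_UN:
  fixes A :: "nat \<Rightarrow> real set"
  assumes "\<And>n. hnull s (A n)"
  shows "hnull s (\<Union>n. A n)"
  unfolding hnull_def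
proof (intro allI impI)
  fix \<delta> \<epsilon> :: real assume d: "\<delta> > 0" and e: "\<epsilon> > 0"
  have "\<forall>n. \<exists>U :: nat \<Rightarrow> real set. A n \<subseteq> (\<Union>i. U i) \<and>
     (\<forall>i. bounded (U i) \<and> diameter (U i) \<le> \<delta>) \<and>
     (\<Sum>i. ennreal (diameter (U i) powr s)) < ennreal (\<epsilon> / 4 * (1/2) ^ n)"
    using assms d e unfolding hnull_def by simp
  then obtain U :: "nat \<Rightarrow> nat \<Rightarrow> real set" where U: "\<And>n. A n \<subseteq> (\<Union>i. U n i)"
    "\<And>n i. bounded (U n i) \<and> diameter (U n i) \<le> \<delta>"
    "\<And>n. (\<Sum>i. ennreal (diameter (U n i) powr s)) < ennreal (\<epsilon> / 4 * (1/2) ^ n)"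
    by metis
  define V where "V i = (case prod_decode i of (n, j) \<Rightarrow> U n j)" for i
  define g where "g = (\<lambda>(n, j). ennreal (diameter (U n j) powr s))"
  have cover: "(\<Union>n. A n) \<subseteq> (\<Union>i. V i)"
  proof
    fix x assume "x \<in> (\<Union>n. A n)"
    then obtain n j where "x \<in> U n j" using U(1) by blast
    then have "x \<in> V (prod_encode (n, j))" unfolding V_def by simp
    then show "x \<in> (\<Union>i. V i)" by blast
  qed
  have bd: "bounded (V i) \<and> diameter (V i) \<le> \<delta>" for i
    unfolding V_def using U(2) by (simp split: prod.split)
  have "(\<Sum>i. ennreal (diameter (V i) powr s)) = (\<Sum>i. g (prod_decode i))"
  proof -
    have "\<And>i. ennreal (diameter (V i) powr s) = g (prod_decode i)"
      by (auto simp: V_def g_def split: prod.split)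
    then show ?thesis by simp
  qed
  also have "\<dots> = (\<Sum>n. \<Sum>j. g (n, j))"
    by (rule suminf_ennreal_2dimen) simp
  also have "\<dots> \<le> (\<Sum>n. ennreal (\<epsilon> / 4 * (1/2) ^ n))"
    by (rule suminf_le) (use U(3) in \<open>auto simp: g_def less_imp_le intro: summableI\<close>)
  also have "\<dots> = ennreal (\<Sum>n. \<epsilon> / 4 * (1/2) ^ n)"
    by (rule suminf_ennreal2) (use e in \<open>auto intro: summable_mult summable_geometric\<close>)
  also have "(\<Sum>n. \<epsilon> / 4 * (1/2::real) ^ n) = \<epsilon> / 2"
    by (subst suminf_mult[OF summable_geometric]) (auto simp: suminf_geometric)
  also have "ennreal (\<epsilon> / 2) < ennreal \<epsilon>" using e by (simp add: ennreal_lessI)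
  finally show "\<exists>U :: nat \<Rightarrow> real set. (\<Union>n. A n) \<subseteq> (\<Union>i. U i) \<and>
     (\<forall>i. bounded (U i) \<and> diameter (U i) \<le> \<delta>) \<and> (\<Sum>i. ennreal (diameter (U i) powr s)) < ennreal \<epsilon>"
    using cover bd by blast
qed

lemma hnull_Un: "hnull s A \<Longrightarrow> hnull s B \<Longrightarrow> hnull s (A \<union> B)"
proof -
  assume a: "hnull s A" "hnull s B"
  have "A \<union> B = (\<Union>n::nat. if n = 0 then A else B)" by (auto split: if_splits)
  moreover have "hnull s (\<Union>n::nat. if n = 0 then A else B)" by (rule hnull_UN) (use a in auto)
  ultimately show ?thesis by simp
qed

lemma hnull_lip:
  fixes f :: "real \<Rightarrow> real"
  assumes s: "s > 0" and L: "L > 0" and lip: "\<And>x y. x \<in> A \<Longrightarrow> y \<in> A \<Longrightarrow> \<bar>f x - f y\<bar> \<le> L * \<bar>x - y\<bar>"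
    and A: "hnull s A"
  shows "hnull s (f ` A)"
  unfolding hnull_def
proof (intro allI impI)
  fix \<delta> \<epsilon> :: real assume d: "\<delta> > 0" and e: "\<epsilon> > 0"
  have Ls: "L powr s > 0" using L by simp
  obtain U :: "nat \<Rightarrow> real set" where U: "A \<subseteq> (\<Union>i. U i)"
    "\<And>i. bounded (U i) \<and> diameter (U i) \<le> \<delta> / L"
    "(\<Sum>i. ennreal (diameter (U i) powr s)) < ennreal (\<epsilon> / L powr s)"
    using A d e L Ls unfolding hnull_def by (meson divide_pos_pos)
  define V where "V i = f ` (U i \<inter> A)" for i
  have cover: "f ` A \<subseteq> (\<Union>i. V i)" using U(1) unfolding V_def by blast
  have Vi: "bounded (V i) \<and> diameter (V i) \<le> L * diameter (U i)" for i
  proof (cases "U i \<inter> A = {}")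
    case True
    then show ?thesis unfolding V_def using diameter_ge_0[of "U i"] U(2)[of i] L by simp
  next
    case False
    then obtain a where a: "a \<in> U i \<inter> A" by blast
    have dd: "\<bar>y - z\<bar> \<le> L * diameter (U i)" if "y \<in> V i" "z \<in> V i" for y z
    proof -
      have yz: "y \<in> f ` (U i \<inter> A)" "z \<in> f ` (U i \<inter> A)" using that by (simp_all add: V_def)
      obtain x1 where x1: "x1 \<in> U i \<inter> A" "y = f x1" using yz(1) by (rule imageE) auto
      obtain x2 where x2: "x2 \<in> U i \<inter> A" "z = f x2" using yz(2) by (rule imageE) auto
      note x = x1(1) x2(1) x1(2) x2(2)
      have "\<bar>x1 - x2\<bar> \<le> diameter (U i)"
        using diameter_bounded_bound[of "U i" x1 x2] U(2)[of i] x by (simp add: dist_real_def)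
      then show ?thesis using lip[of x1 x2] x L by (meson IntE mult_left_mono less_imp_le order_trans)
    qed
    have "bounded (V i)" unfolding bounded_def
      by (rule exI[of _ "f a"], rule exI[of _ "L * diameter (U i)"])
         (use dd a in \<open>auto simp: V_def dist_real_def\<close>)
    moreover have "diameter (V i) \<le> L * diameter (U i)"
      by (rule diameter_le) (use dd a V_def in \<open>auto simp: dist_real_def\<close>)
    ultimately show ?thesis by simp
  qed
  have bd: "bounded (V i) \<and> diameter (V i) \<le> \<delta>" for i
  proof -
    have "L * diameter (U i) \<le> L * (\<delta> / L)" using U(2)[of i] L by (intro mult_left_mono) auto
    then show ?thesis using Vi[of i] L by simp
  qed
  have "(\<Sum>i. ennreal (diameter (V i) powr s)) \<le> (\<Sum>i. ennreal (L powr s) * ennreal (diameter (U i) powr s))"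
  proof (rule suminf_le)
    fix i
    have "diameter (V i) powr s \<le> (L * diameter (U i)) powr s"
      by (rule powr_mono2) (use s Vi diameter_ge_0 in auto)
    also have "\<dots> = L powr s * diameter (U i) powr s"
      using L diameter_ge_0[of "U i"] U(2)[of i] by (simp add: powr_mult)
    finally show "ennreal (diameter (V i) powr s) \<le> ennreal (L powr s) * ennreal (diameter (U i) powr s)"
      by (simp add: ennreal_mult[symmetric] ennreal_leI)
  qed (auto intro: summableI)
  also have "\<dots> = ennreal (L powr s) * (\<Sum>i. ennreal (diameter (U i) powr s))"
    by (rule ennreal_suminf_cmult)
  also have "\<dots> < ennreal (L powr s) * ennreal (\<epsilon> / L powr s)"
    by (rule ennreal_mult_strict_left_mono[OF U(3)]) (use Ls in auto)
  also have "\<dots> = ennreal (L powr s * (\<epsilon> / L powr s))"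
    by (rule ennreal_mult[symmetric]) (use Ls e in auto)
  also have "\<dots> = ennreal \<epsilon>" using Ls by simp
  finally show "\<exists>U :: nat \<Rightarrow> real set. f ` A \<subseteq> (\<Union>i. U i) \<and>
     (\<forall>i. bounded (U i) \<and> diameter (U i) \<le> \<delta>) \<and> (\<Sum>i. ennreal (diameter (U i) powr s)) < ennreal \<epsilon>"
    using cover bd by blast
qed



lemma lip_inv:
  fixes x y r c :: real
  assumes N: "N \<ge> 1" and r: "r > 0" "r \<le> \<bar>x\<bar>" "r \<le> \<bar>y\<bar>"
  shows "\<bar>(c + 1 / (N * x)) - (c + 1 / (N * y))\<bar> \<le> (1 / r^2) * \<bar>x - y\<bar>"
proof -
  have x0: "x \<noteq> 0" and y0: "y \<noteq> 0" using r by auto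
  have "(c + 1 / (N * x)) - (c + 1 / (N * y)) = (y - x) / (N * x * y)"
    using x0 y0 N by (simp add: field_simps)
  then have e: "\<bar>(c + 1 / (N * x)) - (c + 1 / (N * y))\<bar> = \<bar>x - y\<bar> / (N * \<bar>x\<bar> * \<bar>y\<bar>)"
    using N by (simp add: abs_mult abs_minus_commute)
  have "r * r \<le> \<bar>x\<bar> * \<bar>y\<bar>" using r by (intro mult_mono) auto
  also have "\<dots> \<le> N * (\<bar>x\<bar> * \<bar>y\<bar>)" using N mult_right_mono[of 1 N "\<bar>x\<bar> * \<bar>y\<bar>"] by simp
  finally have "r^2 \<le> N * \<bar>x\<bar> * \<bar>y\<bar>" by (simp add: power2_eq_square mult.assoc)
  then have "\<bar>x - y\<bar> / (N * \<bar>x\<bar> * \<bar>y\<bar>) \<le> \<bar>x - y\<bar> / r^2"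
  proof -
    have pos: "0 < N * \<bar>x\<bar> * \<bar>y\<bar>" using N x0 y0 by simp
    show ?thesis by (rule divide_left_mono) (use r pos \<open>r^2 \<le> _\<close> in \<open>auto intro: mult_pos_pos\<close>)
  qed
  then show ?thesis using e by simp
qed

lemma null_equiv:
  fixes R :: "ereal \<Rightarrow> bool"
  assumes s: "s > 0" and mono: "\<And>x y. x \<le> y \<Longrightarrow> R x \<Longrightarrow> R y"
  shows "hausdorff_measure s {\<xi>. R (omega k \<xi>)} = 0 \<longleftrightarrow> hausdorff_measure s {\<xi>. R (omega_lead k \<xi>)} = 0"
proof -
  define S where "S = {\<xi>. R (omega k \<xi>)}"
  define SL where "SL = {\<xi>. R (omega_lead k \<xi>)}"
  have sub: "SL \<subseteq> S" unfolding S_def SL_def using mono omega_lead_le by blast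
  obtain N K C where N: "N > 0" and K: "K > 0" and C: "C > 0"
    and key: "\<forall>P. P \<noteq> 0 \<and> degree P \<le> k \<longrightarrow> (\<exists>m\<le>k. good k N K C m P)"
    using key_poly[of k] by blast
  define g where "g m y = real m + 1 / (real N * y)" for m :: nat and y :: real
  define piece where "piece m n = g m ` (SL \<inter> {y. 1 / real (Suc n) \<le> \<bar>y\<bar>})" for m n :: nat
  have cov: "S \<subseteq> range real \<union> (\<Union>m. \<Union>n. piece m n)"
  proof
    fix \<xi> assume xS: "\<xi> \<in> S"
    show "\<xi> \<in> range real \<union> (\<Union>m. \<Union>n. piece m n)"
    proof (cases "\<xi> \<in> real ` {..k}")
      case True then show ?thesis by auto
    next
      case False
      from omega_le[OF N K C key False] obtain m where m: "m \<le> k"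
        "omega k \<xi> \<le> omega_lead k (1 / (real N * (\<xi> - real m)))" by blast
      define T where "T = 1 / (real N * (\<xi> - real m))"
      have xm: "\<xi> \<noteq> real m" using False m by auto
      have TSL: "T \<in> SL" using mono[OF m(2)] xS unfolding S_def SL_def T_def by auto
      have T0: "\<bar>T\<bar> > 0" unfolding T_def using xm N by simp
      obtain n where n: "inverse (real (Suc n)) < \<bar>T\<bar>" using reals_Archimedean[OF T0] by blast
      have gT: "g m T = \<xi>" unfolding g_def T_def using N xm by simp
      have "\<xi> \<in> piece m n" unfolding piece_def using TSL n gT
        by (intro image_eqI[of _ _ T]) (auto simp: inverse_eq_divide)
      then show ?thesis by blast
    qed
  qed
  have "hausdorff_measure s S = 0 \<longleftrightarrow> hausdorff_measure s SL = 0"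
  proof
    assume "hausdorff_measure s S = 0"
    then show "hausdorff_measure s SL = 0"
      using sub hnull_subset unfolding hm_zero_iff by blast
  next
    assume "hausdorff_measure s SL = 0"
    then have nSL: "hnull s SL" unfolding hm_zero_iff .
    have np: "hnull s (piece m n)" for m n
    proof -
      have L: "(0::real) < real (Suc n) ^ 2" by simp
      have A: "hnull s (SL \<inter> {y. 1 / real (Suc n) \<le> \<bar>y\<bar>})" by (rule hnull_subset[OF nSL]) auto
      have lip: "\<bar>g m x - g m y\<bar> \<le> real (Suc n) ^ 2 * \<bar>x - y\<bar>"
        if "x \<in> SL \<inter> {y. 1 / real (Suc n) \<le> \<bar>y\<bar>}" "y \<in> SL \<inter> {y. 1 / real (Suc n) \<le> \<bar>y\<bar>}" for x y
      proof -
        have "\<bar>g m x - g m y\<bar> \<le> (1 / (1 / real (Suc n))^2) * \<bar>x - y\<bar>"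
          unfolding g_def using N that by (intro lip_inv) auto
        then show ?thesis by (simp add: power_one_over)
      qed
      show ?thesis unfolding piece_def by (rule hnull_lip[OF s L lip A])
    qed
    have "hnull s (range real \<union> (\<Union>m. \<Union>n. piece m n))"
      by (intro hnull_Un hnull_range[OF s] hnull_UN np)
    then show "hausdorff_measure s S = 0" unfolding hm_zero_iff using cov hnull_subset by blast
  qed
  then show ?thesis unfolding S_def SL_def .
qed

theorem mainTheorem3:
  fixes k :: nat and w :: real
  assumes "k \<ge> 1"
  shows "hausdorff_dim {\<xi>. omega k \<xi> \<ge> ereal w} = hausdorff_dim {\<xi>. omega_lead k \<xi> \<ge> ereal w}
       \<and> hausdorff_dim {\<xi>. omega k \<xi> > ereal w} = hausdorff_dim {\<xi>. omega_lead k \<xi> > ereal w}"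
proof -
  have 1: "{s. s > 0 \<and> hausdorff_measure s {\<xi>. omega k \<xi> \<ge> ereal w} = 0} =
           {s. s > 0 \<and> hausdorff_measure s {\<xi>. omega_lead k \<xi> \<ge> ereal w} = 0}"
    using null_equiv[of _ "\<lambda>x. x \<ge> ereal w" k] by (auto intro: order_trans)
  have 2: "{s. s > 0 \<and> hausdorff_measure s {\<xi>. omega k \<xi> > ereal w} = 0} =
           {s. s > 0 \<and> hausdorff_measure s {\<xi>. omega_lead k \<xi> > ereal w} = 0}"
    using null_equiv[of _ "\<lambda>x. x > ereal w" k] by (auto intro: less_le_trans)
  show ?thesis unfolding hausdorff_dim_def using 1 2 by simp
qed

end
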